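(* For every positive integer $n$, $\mathrm{Sort}_n(\mathrm{SC}_{3\underline{21}})=\mathrm{Av}_n(123,132)$, the set of permutations in $\mathfrak S_n$ avoiding both classical patterns $123$ and $132$.
   Context: $\mathfrak S_n$ is the set of permutations of $\{1,\dots,n\}$. A vincular pattern is a permutation with some entries underlined; a sequence contains it if it has a subsequence with the same relative order in which entries corresponding to adjacent underlined entries occupy consecutive positions. An occurrence of $3\underline{21}$ is $a_i a_j a_{j+1}$ with $i<j$ and $a_{j+1}<a_j<a_i$. Classical patterns have no underlining. For a pattern $\sigma$, the map $\mathrm{SC}_\sigma$ acts on $\tau$: read entries left to right; when the next entry $x$ is read, if pushing $x$ yields a stack whose entries read top to bottom (stack adjacency = consecutive positions) avoid $\sigma$, push $x$; otherwise pop the top stack entry to the output and repeat. At the end pop all remaining entries; the output is $\mathrm{SC}_\sigma(\tau)$. West's stack-sorting map is $s=\mathrm{SC}_{21}$. $\mathrm{Sort}_n(\mathrm{SC}_\sigma)=\{\tau\in\mathfrak S_n : s(\mathrm{SC}_\sigma(\tau))=12\cdots n\}$. *)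

theory Defs
  imports Main
begin

definition perms :: "nat \<Rightarrow> nat list set" where
  "perms n = {w. distinct w \<and> set w = {1..n}}"

definition occurs_at :: "nat list \<Rightarrow> nat list \<Rightarrow> (nat \<Rightarrow> nat) \<Rightarrow> bool" where
  "occurs_at p w f \<longleftrightarrow>
     (\<forall>i j. i < j \<and> j < length p \<longrightarrow> f i < f j) \<and>
     (\<forall>i < length p. f i < length w) \<and>
     (\<forall>i < length p. \<forall>j < length p. (p ! i < p ! j) = (w ! (f i) < w ! (f j)))"

definition contains :: "nat list \<Rightarrow> nat list \<Rightarrow> bool" where
  "contains p w \<longleftrightarrow> (\<exists>f. occurs_at p w f)"

text \<open>Vincular pattern containment: A is the set of (0-based) pattern indices i such that
  entries i and i+1 of the pattern are both underlined and adjacent, so their images must be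
  consecutive positions.\<close>
definition contains_vinc :: "nat list \<Rightarrow> nat set \<Rightarrow> nat list \<Rightarrow> bool" where
  "contains_vinc p A w \<longleftrightarrow>
     (\<exists>f. occurs_at p w f \<and> (\<forall>i\<in>A. Suc i < length p \<longrightarrow> f (Suc i) = Suc (f i)))"

text \<open>The stack is a list whose head is the top, so the list
  reads the stack top to bottom. \<open>sc ok input stack\<close> returns the output produced.
  \<open>ok\<close> tests whether a stack content (top to bottom) is admissible.
  Pushing onto the empty stack gives a one-element stack, which avoids every pattern of length
  at least 2, so it is always allowed.\<close>
fun sc :: "(nat list \<Rightarrow> bool) \<Rightarrow> nat list \<Rightarrow> nat list \<Rightarrow> nat list" where
  "sc ok [] st = st"
| "sc ok (x # xs) [] = sc ok xs [x]"
| "sc ok (x # xs) (y # st) =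
     (if ok (x # y # st) then sc ok xs (x # y # st) else y # sc ok (x # xs) (st))"

definition SC :: "nat list \<Rightarrow> nat set \<Rightarrow> nat list \<Rightarrow> nat list" where
  "SC p A \<tau> = sc (\<lambda>st. \<not> contains_vinc p A st) \<tau> []"

definition west_s :: "nat list \<Rightarrow> nat list" where
  "west_s \<tau> = SC [2, 1] {} \<tau>"

text \<open>The pattern 3_21 (entries 2 and 1 underlined): [3,2,1] with pattern indices 1,2 adjacent.\<close>
definition SC_3_21 :: "nat list \<Rightarrow> nat list" where
  "SC_3_21 \<tau> = SC [3, 2, 1] {1} \<tau>"

definition Sort_SC_3_21 :: "nat \<Rightarrow> nat list set" where
  "Sort_SC_3_21 n = {\<tau> \<in> perms n. west_s (SC_3_21 \<tau>) = [1..<n+1]}"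

definition Av :: "nat \<Rightarrow> nat list list \<Rightarrow> nat list set" where
  "Av n ps = {w \<in> perms n. \<forall>p \<in> set ps. \<not> contains p w}"

end

theory Submission
  imports Defs "HOL-Library.Sublist"
begin

fun pops :: "(nat list \<Rightarrow> bool) \<Rightarrow> nat \<Rightarrow> nat list \<Rightarrow> nat list \<times> nat list" where
  "pops ok x [] = ([], [])"
| "pops ok x (y # st) = (if ok (x # y # st) then ([], y # st)
     else (let pr = pops ok x st in (y # fst pr, snd pr)))"

fun run :: "(nat list \<Rightarrow> bool) \<Rightarrow> nat list \<Rightarrow> nat list \<Rightarrow> nat list \<times> nat list" where
  "run ok [] st = ([], st)"
| "run ok (x # xs) st = (let pr = pops ok x st; q = run ok xs (x # snd pr) in (fst pr @ fst q, snd q))"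

lemma sc_pops: "sc ok (x # xs) st = fst (pops ok x st) @ sc ok xs (x # snd (pops ok x st))"
  by (induction st) (auto simp: Let_def)

lemma pops_split: "fst (pops ok x st) @ snd (pops ok x st) = st"
  by (induction st) (auto simp: Let_def)

lemma pops_ok: "snd (pops ok x st) = [] \<or> ok (x # snd (pops ok x st))"
  by (induction st) (auto simp: Let_def)

lemma sc_append: "sc ok (xs @ ys) st = fst (run ok xs st) @ sc ok ys (snd (run ok xs st))"
  by (induction xs arbitrary: st) (auto simp: Let_def sc_pops)

lemma sc_set: "set (sc ok xs st) = set xs \<union> set st"
  by (induction ok xs st rule: sc.induct) auto

lemma sc_length: "length (sc ok xs st) = length xs + length st"
  by (induction ok xs st rule: sc.induct) auto

lemma sc_stack: "subseq st (sc ok xs st)"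
  by (induction ok xs st rule: sc.induct) (auto intro: subseq_order.order_trans)

lemma pops_floor:
  assumes "B \<noteq> []" "ok (x # B)"
  shows "\<exists>A1 A2. A = A1 @ A2 \<and> pops ok x (A @ B) = (A1, A2 @ B)"
  using assms
proof (induction A)
  case Nil
  then show ?case by (cases B) auto
next
  case (Cons y A)
  then obtain A1 A2 where "A = A1 @ A2" "pops ok x (A @ B) = (A1, A2 @ B)" by blast
  then show ?case
    by (cases "ok (x # y # A @ B)") (auto simp: Let_def intro!: exI[of _ "y # A1"] exI[of _ "y # A"] exI[of _ "[]"])
qed

lemma run_floor:
  assumes "B \<noteq> []" "\<forall>x\<in>set xs. ok (x # B)"
  shows "\<exists>U'. snd (run ok xs (U @ B)) = U' @ B \<and> set U' \<subseteq> set xs \<union> set U"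
  using assms
proof (induction xs arbitrary: U)
  case Nil
  then show ?case by auto
next
  case (Cons x xs)
  obtain A1 A2 where A: "U = A1 @ A2" "pops ok x (U @ B) = (A1, A2 @ B)"
    using pops_floor[of B ok x U] Cons.prems by auto
  obtain U' where "snd (run ok xs ((x # A2) @ B)) = U' @ B" "set U' \<subseteq> set xs \<union> set (x # A2)"
    using Cons by (metis list.set_intros(2))
  then show ?case using A by (auto simp: Let_def)
qed

lemma subseq_rev: "subseq xs ys \<Longrightarrow> subseq (rev xs) (rev ys)"
  by (induction rule: list_emb.induct) (auto intro: subseq_rev_drop_many list_emb_append_mono)

lemma run_rev: "subseq (rev (snd (run ok xs st))) (rev st @ xs)"
proof (induction xs arbitrary: st)
  case Nil
  then show ?case by simp
next
  case (Cons x xs)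
  have "subseq (rev (snd (pops ok x st))) (rev st)"
    using pops_split[of ok x st] by (metis list_emb_append2 rev_append subseq_order.order_refl subseq_rev)
  then have "subseq (rev (x # snd (pops ok x st)) @ xs) (rev st @ x # xs)"
    by (metis append.assoc append_Cons append_Nil list_emb_append_mono rev.simps(2) subseq_order.order_refl)
  moreover have "subseq (rev (snd (pops ok x st)) @ x # xs) (rev st @ x # xs)"
    using \<open>subseq (rev (snd (pops ok x st))) (rev st)\<close> by (simp add: list_emb_append_mono)
  ultimately show ?case using Cons[of "x # snd (pops ok x st)"]
    by (auto simp: Let_def intro: subseq_order.order_trans)
qed

definition bad :: "nat list \<Rightarrow> bool" where
  "bad w \<longleftrightarrow> (\<exists>i j. i < j \<and> Suc j < length w \<and> w ! Suc j < w ! j \<and> w ! j < w ! i)"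

lemma all3: "(\<forall>i<(3::nat). P i) \<longleftrightarrow> P 0 \<and> P 1 \<and> P 2"
  by (auto simp: less_Suc_eq eval_nat_numeral)

lemma all2: "(\<forall>i<(2::nat). P i) \<longleftrightarrow> P 0 \<and> P 1"
  by (auto simp: less_Suc_eq eval_nat_numeral)

lemma bad_iff: "contains_vinc [3,2,1] {1} w \<longleftrightarrow> bad w"
proof
  assume "contains_vinc [3,2,1] {1} w"
  then obtain f where f: "occurs_at [3,2,1] w f" "f (Suc 1) = Suc (f 1)"
    unfolding contains_vinc_def by force
  have o: "\<forall>i j. i < j \<and> j < 3 \<longrightarrow> f i < f j" "\<forall>i<3. f i < length w"
    "\<forall>i<3. \<forall>j<3. ([3,2,1::nat] ! i < [3,2,1] ! j) = (w ! f i < w ! f j)"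
    using f(1) unfolding occurs_at_def by auto
  have "f 0 < f 1" using o(1) by auto
  moreover have "f (Suc 1) < length w" using o(2) by auto
  moreover have "w ! f (Suc 1) < w ! f 1" using o(3) by (auto simp: all3 numeral_2_eq_2)
  moreover have "w ! f 1 < w ! f 0" using o(3) by (auto simp: all3)
  ultimately show "bad w" unfolding bad_def using f(2) by metis
next
  assume "bad w"
  then obtain i j where ij: "i < j" "Suc j < length w" "w ! Suc j < w ! j" "w ! j < w ! i"
    unfolding bad_def by auto
  define f where "f = (\<lambda>k::nat. if k = 0 then i else if k = 1 then j else Suc j)"
  have "occurs_at [3,2,1] w f"
    unfolding occurs_at_def f_def using ij by (auto simp: all3)
  moreover have "f (Suc 1) = Suc (f 1)" by (simp add: f_def)
  ultimately show "contains_vinc [3,2,1] {1} w" unfolding contains_vinc_def by auto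
qed

lemma okPush:
  assumes "\<not> bad st" "\<forall>j. Suc j < length st \<longrightarrow> st ! Suc j < st ! j \<longrightarrow> x < st ! j"
  shows "\<not> bad (x # st)"
proof
  assume "bad (x # st)"
  then obtain i j where ij: "i < j" "Suc j < length (x # st)" "(x # st) ! Suc j < (x # st) ! j"
    "(x # st) ! j < (x # st) ! i" unfolding bad_def by blast
  obtain j0 where j0: "j = Suc j0" using ij(1) by (cases j) auto
  show False
  proof (cases i)
    case 0
    then show ?thesis using ij assms(2) j0 by force
  next
    case (Suc i0)
    then have "bad st" unfolding bad_def using ij j0
      by (intro exI[of _ i0] exI[of _ j0]) auto
    then show ?thesis using assms(1) by blast
  qed
qed

lemma goodTop:
  assumes "\<not> bad (y # W)" "Suc j < length W" "W ! Suc j < W ! j"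
  shows "y \<le> W ! j"
proof (rule ccontr)
  assume "\<not> y \<le> W ! j"
  then have "bad (y # W)" unfolding bad_def using assms(2,3)
    by (intro exI[of _ 0] exI[of _ "Suc j"]) auto
  then show False using assms(1) by blast
qed

lemma bad_single: "\<not> bad [x]"
  unfolding bad_def by auto

lemma bad_desc: "w0 < b \<Longrightarrow> b < c \<Longrightarrow> bad (c # us @ b # w0 # W)"
  unfolding bad_def
  by (intro exI[of _ 0] exI[of _ "Suc (length us)"]) (auto simp: nth_append)

lemma sorted_not21: "contains_vinc [2,1] {} w \<longleftrightarrow> \<not> sorted w"
proof
  assume "contains_vinc [2,1] {} w"
  then obtain f where f: "occurs_at [2,1] w f" unfolding contains_vinc_def by auto
  then have o: "\<forall>i j. i < j \<and> j < 2 \<longrightarrow> f i < f j" "\<forall>i<2. f i < length w"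
    "\<forall>i<2. \<forall>j<2. ([2,1::nat] ! i < [2,1] ! j) = (w ! f i < w ! f j)"
    unfolding occurs_at_def by auto
  have "f 0 < f 1" "f 1 < length w" using o(1,2) by auto
  moreover have "w ! f 1 < w ! f 0" using o(3)[rule_format, of 1 0] by simp
  ultimately show "\<not> sorted w" by (metis less_imp_le_nat not_le sorted_iff_nth_mono)
next
  assume "\<not> sorted w"
  then obtain i j where ij: "i \<le> j" "j < length w" "\<not> w ! i \<le> w ! j"
    unfolding sorted_iff_nth_mono by blast
  then have "i < j" by (metis le_neq_implies_less order_refl)
  define f where "f = (\<lambda>k::nat. if k = 0 then i else j)"
  have "occurs_at [2,1] w f" unfolding occurs_at_def f_def using ij \<open>i < j\<close> by (auto simp: all2)
  then show "contains_vinc [2,1] {} w" unfolding contains_vinc_def by auto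
qed

lemma subseq_Cons_idx: "subseq (x # xs) w \<longleftrightarrow> (\<exists>i < length w. w ! i = x \<and> subseq xs (drop (Suc i) w))"
proof
  assume "subseq (x # xs) w"
  then obtain us vs where "w = us @ x # vs" "subseq xs vs" using list_emb_ConsD by fastforce
  then show "\<exists>i < length w. w ! i = x \<and> subseq xs (drop (Suc i) w)"
    by (intro exI[of _ "length us"]) auto
next
  assume "\<exists>i < length w. w ! i = x \<and> subseq xs (drop (Suc i) w)"
  then obtain i where i: "i < length w" "w ! i = x" "subseq xs (drop (Suc i) w)" by blast
  have "w = take i w @ w ! i # drop (Suc i) w" using i(1) by (simp add: id_take_nth_drop)
  then show "subseq (x # xs) w" using i by (metis list_emb_Cons2 list_emb_append2)
qed

lemma subseq2_idx: "subseq [x, y] w \<longleftrightarrow> (\<exists>i j. i < j \<and> j < length w \<and> w ! i = x \<and> w ! j = y)"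
proof
  assume "subseq [x, y] w"
  then obtain i where i: "i < length w" "w ! i = x" "y \<in> set (drop (Suc i) w)"
    unfolding subseq_Cons_idx[of x] subseq_singleton_left by blast
  then obtain j' where "j' < length (drop (Suc i) w)" "drop (Suc i) w ! j' = y"
    by (meson in_set_conv_nth)
  then show "\<exists>i j. i < j \<and> j < length w \<and> w ! i = x \<and> w ! j = y"
    using i by (intro exI[of _ i] exI[of _ "Suc i + j'"]) auto
next
  assume "\<exists>i j. i < j \<and> j < length w \<and> w ! i = x \<and> w ! j = y"
  then obtain i j where ij: "i < j" "j < length w" "w ! i = x" "w ! j = y" by blast
  have "drop (Suc i) w ! (j - Suc i) = y" "j - Suc i < length (drop (Suc i) w)" using ij by auto
  then have "y \<in> set (drop (Suc i) w)" by (metis nth_mem)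
  then show "subseq [x, y] w" unfolding subseq_Cons_idx[of x] subseq_singleton_left
    using ij by (intro exI[of _ i]) auto
qed

lemma subseq3_idx: "subseq [x, y, z] w \<longleftrightarrow>
   (\<exists>i j k. i < j \<and> j < k \<and> k < length w \<and> w ! i = x \<and> w ! j = y \<and> w ! k = z)"
proof
  assume "subseq [x, y, z] w"
  then obtain i where i: "i < length w" "w ! i = x" "subseq [y, z] (drop (Suc i) w)"
    unfolding subseq_Cons_idx[of x] by blast
  then obtain j k where "j < k" "k < length (drop (Suc i) w)" "drop (Suc i) w ! j = y" "drop (Suc i) w ! k = z"
    unfolding subseq2_idx by blast
  then show "\<exists>i j k. i < j \<and> j < k \<and> k < length w \<and> w ! i = x \<and> w ! j = y \<and> w ! k = z"
    using i by (intro exI[of _ i] exI[of _ "Suc i + j"] exI[of _ "Suc i + k"]) auto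
next
  assume "\<exists>i j k. i < j \<and> j < k \<and> k < length w \<and> w ! i = x \<and> w ! j = y \<and> w ! k = z"
  then obtain i j k where ijk: "i < j" "j < k" "k < length w" "w ! i = x" "w ! j = y" "w ! k = z" by blast
  have "subseq [y, z] (drop (Suc i) w)" unfolding subseq2_idx using ijk
    by (intro exI[of _ "j - Suc i"] exI[of _ "k - Suc i"]) auto
  then show "subseq [x, y, z] w" unfolding subseq_Cons_idx[of x] using ijk by (intro exI[of _ i]) auto
qed

lemma occ3:
  assumes "occurs_at [p0,p1,p2] w f"
  shows "f 0 < f 1 \<and> f 1 < f 2 \<and> f 2 < length w \<and>
    (p0 < p1 \<longleftrightarrow> w ! f 0 < w ! f 1) \<and> (p1 < p2 \<longleftrightarrow> w ! f 1 < w ! f 2) \<and>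
    (p0 < p2 \<longleftrightarrow> w ! f 0 < w ! f 2) \<and> (p1 < p0 \<longleftrightarrow> w ! f 1 < w ! f 0) \<and>
    (p2 < p1 \<longleftrightarrow> w ! f 2 < w ! f 1) \<and> (p2 < p0 \<longleftrightarrow> w ! f 2 < w ! f 0)"
proof -
  have o: "\<forall>i j. i < j \<and> j < 3 \<longrightarrow> f i < f j" "\<forall>i<3. f i < length w"
    "\<forall>i<3. \<forall>j<3. ([p0,p1,p2] ! i < [p0,p1,p2] ! j) = (w ! f i < w ! f j)"
    using assms unfolding occurs_at_def by auto
  show ?thesis
    using o(1)[rule_format, of 0 1] o(1)[rule_format, of 1 2] o(2)[rule_format, of 2]
      o(3)[rule_format, of 0 1] o(3)[rule_format, of 1 2] o(3)[rule_format, of 0 2]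
      o(3)[rule_format, of 1 0] o(3)[rule_format, of 2 1] o(3)[rule_format, of 2 0]
    by (simp add: numeral_2_eq_2)
qed

lemma c123: "contains [1,2,3] w \<longleftrightarrow> (\<exists>x y z. subseq [x,y,z] w \<and> x < y \<and> y < z)"
proof
  assume "contains [1,2,3] w"
  then obtain f where "occurs_at [1,2,3] w f" unfolding contains_def by auto
  from occ3[OF this] show "\<exists>x y z. subseq [x,y,z] w \<and> x < y \<and> y < z"
  proof -
    have "subseq [w ! f 0, w ! f 1, w ! f 2] w"
      unfolding subseq3_idx using occ3[OF \<open>occurs_at _ w f\<close>] by blast
    then show ?thesis using occ3[OF \<open>occurs_at _ w f\<close>] by auto
  qed
next
  assume "\<exists>x y z. subseq [x,y,z] w \<and> x < y \<and> y < z"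
  then obtain i j k where ijk: "i < j" "j < k" "k < length w" "w!i < w!j" "w!j < w!k"
    unfolding subseq3_idx by blast
  define f where "f = (\<lambda>a::nat. if a = 0 then i else if a = 1 then j else k)"
  have "occurs_at [1,2,3] w f" unfolding occurs_at_def f_def using ijk
    by (auto simp: all3)
  then show "contains [1,2,3] w" unfolding contains_def by auto
qed

lemma c132: "contains [1,3,2] w \<longleftrightarrow> (\<exists>x y z. subseq [x,y,z] w \<and> x < z \<and> z < y)"
proof
  assume "contains [1,3,2] w"
  then obtain f where "occurs_at [1,3,2] w f" unfolding contains_def by auto
  from occ3[OF this] show "\<exists>x y z. subseq [x,y,z] w \<and> x < z \<and> z < y"
  proof -
    have "subseq [w ! f 0, w ! f 1, w ! f 2] w"
      unfolding subseq3_idx using occ3[OF \<open>occurs_at _ w f\<close>] by blast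
    then show ?thesis using occ3[OF \<open>occurs_at _ w f\<close>] by auto
  qed
next
  assume "\<exists>x y z. subseq [x,y,z] w \<and> x < z \<and> z < y"
  then obtain i j k where ijk: "i < j" "j < k" "k < length w" "w!i < w!k" "w!k < w!j"
    unfolding subseq3_idx by blast
  define f where "f = (\<lambda>a::nat. if a = 0 then i else if a = 1 then j else k)"
  have "occurs_at [1,3,2] w f" unfolding occurs_at_def f_def using ijk
    by (auto simp: all3)
  then show "contains [1,3,2] w" unfolding contains_def by auto
qed


lemma west_eq: "west_s \<tau> = sc sorted \<tau> []"
  unfolding west_s_def SC_def sorted_not21 by simp

lemma SC_eq: "SC_3_21 \<tau> = sc (\<lambda>st. \<not> bad st) \<tau> []"
  unfolding SC_3_21_def SC_def bad_iff by simp

lemma pops_lt: "sorted st \<Longrightarrow> y \<in> set (fst (pops sorted x st)) \<Longrightarrow> y < x"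
proof (induction st)
  case Nil
  then show ?case by simp
next
  case (Cons z st)
  show ?case
  proof (cases "sorted (x # z # st)")
    case True
    then show ?thesis using Cons by simp
  next
    case False
    then have "z < x" using Cons.prems(1) by auto
    then show ?thesis using Cons False by (auto simp: Let_def)
  qed
qed

lemma subseq_pair: "y \<in> set A \<Longrightarrow> x \<in> set B \<Longrightarrow> subseq [y, x] (A @ B)"
  using list_emb_append_mono[of "(=)" "[y]" A "[x]" B] by (simp add: subseq_singleton_left)

lemma west_sorted:
  assumes "sorted st" "\<forall>y\<in>set st. \<forall>u v. subseq [u, v] xs \<longrightarrow> \<not> (v < y \<and> y < u)"
    "\<forall>y u v. subseq [y, u, v] xs \<longrightarrow> \<not> (v < y \<and> y < u)"
  shows "sorted (sc sorted xs st)"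
  using assms
proof (induction xs arbitrary: st)
  case Nil
  then show ?case by simp
next
  case (Cons x xs)
  define p where "p = fst (pops sorted x st)"
  define r where "r = snd (pops sorted x st)"
  have st: "st = p @ r" using pops_split[of sorted x st] by (simp add: p_def r_def)
  have sxr: "sorted (x # r)" using pops_ok[of sorted x st] by (auto simp: r_def)
  have "sorted (sc sorted xs (x # r))"
  proof (rule Cons.IH[OF sxr])
    show "\<forall>y\<in>set (x # r). \<forall>u v. subseq [u, v] xs \<longrightarrow> \<not> (v < y \<and> y < u)"
    proof (intro ballI allI impI)
      fix y u v assume y: "y \<in> set (x # r)" and uv: "subseq [u, v] xs"
      show "\<not> (v < y \<and> y < u)"
      proof (cases "y = x")
        case True
        then show ?thesis using Cons.prems(3) uv by auto
      next
        case False
        then have "y \<in> set st" using y st by auto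
        then show ?thesis using Cons.prems(2) list_emb_Cons[OF uv, of x] by blast
      qed
    qed
    show "\<forall>y u v. subseq [y, u, v] xs \<longrightarrow> \<not> (v < y \<and> y < u)"
      using Cons.prems(3) by (meson list_emb_Cons)
  qed
  moreover have "sorted p" using Cons.prems(1) st by (simp add: sorted_append)
  moreover have "\<forall>u\<in>set p. \<forall>v\<in>set (sc sorted xs (x # r)). u \<le> v"
  proof (intro ballI)
    fix u v assume u: "u \<in> set p" and v: "v \<in> set (sc sorted xs (x # r))"
    have ux: "u < x" using pops_lt[OF Cons.prems(1)] u p_def by blast
    have "v \<in> set xs \<or> v = x \<or> v \<in> set r" using v by (auto simp: sc_set)
    then show "u \<le> v"
    proof (elim disjE)
      assume "v \<in> set xs"
      then have "subseq [x, v] (x # xs)" by (simp add: subseq_singleton_left)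
      moreover have "u \<in> set st" using u st by simp
      ultimately have "\<not> (v < u \<and> u < x)" using Cons.prems(2) by blast
      then show ?thesis using ux by simp
    next
      assume "v = x" then show ?thesis using ux by simp
    next
      assume "v \<in> set r" then show ?thesis using Cons.prems(1) st u by (auto simp: sorted_append)
    qed
  qed
  ultimately show ?case by (simp add: sc_pops p_def[symmetric] r_def[symmetric] sorted_append)
qed

lemma west_231:
  assumes "(y \<in> set st \<and> subseq [z, x] xs) \<or> subseq [y, z, x] xs" "y < z"
  shows "subseq [y, x] (sc sorted xs st)"
  using assms
proof (induction xs arbitrary: st)
  case Nil
  then show ?case by auto
next
  case (Cons x' xs)
  define p where "p = fst (pops sorted x' st)"
  define r where "r = snd (pops sorted x' st)"
  have st: "st = p @ r" using pops_split[of sorted x' st] by (simp add: p_def r_def)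
  have sxr: "r = [] \<or> sorted (x' # r)" using pops_ok[of sorted x' st] by (auto simp: r_def)
  have out: "sc sorted (x' # xs) st = p @ sc sorted xs (x' # r)"
    by (simp add: sc_pops p_def r_def)
  have fin: "subseq [y, x] (sc sorted (x' # xs) st)" if "y \<in> set p" "x \<in> set xs"
    unfolding out by (rule subseq_pair) (use that in \<open>auto simp: sc_set\<close>)
  have rec: "subseq [y, x] (sc sorted (x' # xs) st)" if "subseq [y, x] (sc sorted xs (x' # r))"
    unfolding out using that by (rule list_emb_append2)
  from Cons.prems(1) show ?case
  proof (elim disjE conjE)
    assume y: "y \<in> set st" and zx: "subseq [z, x] (x' # xs)"
    show ?thesis
    proof (cases "subseq [z, x] xs")
      case True
      then have xin: "x \<in> set xs" using subseq_Cons'[OF True] by (simp add: subseq_singleton_left)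
      show ?thesis
      proof (cases "y \<in> set p")
        case True then show ?thesis using fin xin by blast
      next
        case False
        then have "y \<in> set (x' # r)" using y st by auto
        then have "subseq [y, x] (sc sorted xs (x' # r))"
          using Cons.IH[of "x' # r"] True Cons.prems(2) by simp
        then show ?thesis by (rule rec)
      qed
    next
      case False
      then have "z = x'" "subseq [x] xs" using zx by (cases "z = x'"; simp)+
      then have xin: "x \<in> set xs" by (simp add: subseq_singleton_left)
      have "y \<notin> set r"
      proof
        assume "y \<in> set r"
        then have "sorted (z # r)" using sxr \<open>z = x'\<close> by auto
        then show False using \<open>y \<in> set r\<close> Cons.prems(2) by auto
      qed
      then have "y \<in> set p" using y st by auto
      then show ?thesis using fin xin by blast
    qed
  next
    assume yzx: "subseq [y, z, x] (x' # xs)"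
    show ?thesis
    proof (cases "subseq [y, z, x] xs")
      case True
      then have "subseq [y, x] (sc sorted xs (x' # r))"
        using Cons.IH[of "x' # r"] Cons.prems(2) by simp
      then show ?thesis by (rule rec)
    next
      case False
      then have "y = x'" "subseq [z, x] xs" using yzx by (cases "y = x'"; simp)+
      then have "subseq [y, x] (sc sorted xs (x' # r))"
        using Cons.IH[of "x' # r"] Cons.prems(2) by simp
      then show ?thesis by (rule rec)
    qed
  qed
qed

lemma sc_push_all:
  assumes "\<forall>pre x suf. xs = pre @ x # suf \<longrightarrow> ok (x # rev pre @ st)"
  shows "sc ok xs st = rev xs @ st"
  using assms
proof (induction xs arbitrary: st)
  case Nil
  then show ?case by simp
next
  case (Cons x xs)
  have "ok (x # st)" using Cons.prems[rule_format, of "[]" x xs] by simp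
  then have "sc ok (x # xs) st = sc ok xs (x # st)" by (cases st) auto
  moreover have "sc ok xs (x # st) = rev xs @ x # st"
  proof (rule Cons.IH, intro allI impI)
    fix pre y suf assume "xs = pre @ y # suf"
    then show "ok (y # rev pre @ x # st)" using Cons.prems[rule_format, of "x # pre" y suf] by simp
  qed
  ultimately show ?case by simp
qed


lemma output_perm:
  assumes "\<tau> \<in> perms n" "set w = set \<tau>" "length w = length \<tau>" "sorted w"
  shows "w = [1..<n+1]"
proof -
  have d: "distinct \<tau>" "set \<tau> = {1..n}" using assms(1) unfolding perms_def by auto
  then have "length \<tau> = n" using distinct_card by fastforce
  then have "card (set w) = length w" using assms(2,3) d by simp
  then have "distinct w" by (rule card_distinct)
  moreover have "set w = set [1..<n+1]" using assms(2) d by auto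
  moreover have "sorted [1..<n+1]" "distinct [1..<n+1]" by (simp_all only: sorted_upt distinct_upt)
  ultimately show ?thesis using sorted_distinct_set_unique[OF assms(4)] by blast
qed

lemma floorGe:
  assumes "\<not> bad st" "\<forall>e\<in>set st. a \<le> e" "x \<le> a"
  shows "\<not> bad (x # st)"
proof (rule okPush[OF assms(1)], intro allI impI)
  fix j assume "Suc j < length st" "st ! Suc j < st ! j"
  moreover have "a \<le> st ! Suc j" using assms(2) calculation(1) by auto
  ultimately show "x < st ! j" using assms(3) by linarith
qed

lemma floorTop:
  assumes "\<not> bad (b # W)" "x < b"
  shows "\<not> bad (x # b # W)"
proof (rule okPush[OF assms(1)], intro allI impI)
  fix j assume j: "Suc j < length (b # W)" "(b # W) ! Suc j < (b # W) ! j"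
  show "x < (b # W) ! j"
  proof (cases j)
    case 0 then show ?thesis using assms(2) by simp
  next
    case (Suc j')
    then have "b \<le> W ! j'" using goodTop[OF assms(1)] j by auto
    then show ?thesis using Suc assms(2) by simp
  qed
qed

lemma subseq_set: "subseq xs ys \<Longrightarrow> set xs \<subseteq> set ys"
  by (induction rule: list_emb.induct) auto

lemma subseq_skip: "subseq (x # xs) (M @ ys) \<Longrightarrow> x \<notin> set M \<Longrightarrow> subseq (x # xs) ys"
  by (induction M) (auto split: if_splits)

lemma subseq_desc_rev:
  assumes "subseq (rev L) P" "Suc j < length L"
  shows "subseq [L ! Suc j, L ! j] P"
proof -
  have "subseq [L ! Suc j, L ! j] (rev L)" unfolding subseq2_idx using assms(2)
    by (intro exI[of _ "length L - 1 - Suc j"] exI[of _ "length L - 1 - j"]) (auto simp: rev_nth)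
  then show ?thesis using assms(1) by (rule subseq_order.order_trans)
qed

lemma claimA:
  assumes "\<tau> \<in> perms n" "\<exists>x y z. subseq [x,y,z] \<tau> \<and> x < y \<and> x < z"
  shows "west_s (SC_3_21 \<tau>) \<noteq> [1..<n+1]"
proof -
  have dist: "distinct \<tau>" using assms(1) unfolding perms_def by auto
  define Q where "Q k \<longleftrightarrow> (\<exists>P a Rest u w. \<tau> = P @ a # Rest \<and> length P = k \<and> subseq [u, w] Rest \<and> a < u \<and> a < w)" for k
  have "\<exists>k. Q k"
  proof -
    obtain x y z where xyz: "subseq [x,y,z] \<tau>" "x < y" "x < z" using assms(2) by blast
    then obtain us v vs where "\<tau> = us @ v # vs" "x = v" "subseq [y, z] vs"
      using list_emb_ConsD[OF xyz(1)] by blast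
    then show ?thesis unfolding Q_def using xyz by blast
  qed
  then have "Q (LEAST k. Q k)" by (rule LeastI_ex)
  then obtain P a Rest u0 w0 where PR: "\<tau> = P @ a # Rest" "length P = (LEAST k. Q k)"
    "subseq [u0, w0] Rest" "a < u0" "a < w0" unfolding Q_def by blast
  have LM: False if "P = P1 @ v # P2" "subseq [u, w] (P2 @ a # Rest)" "v < u" "v < w" for P1 v P2 u w
  proof -
    have "Q (length P1)" unfolding Q_def using that PR(1)
      by (intro exI[of _ P1] exI[of _ v] exI[of _ "P2 @ a # Rest"] exI[of _ u] exI[of _ w]) auto
    moreover have "length P1 < (LEAST k. Q k)" using PR(2) that(1) by simp
    ultimately show False using not_less_Least by blast
  qed
  have "\<exists>x\<in>set Rest. a < x" using PR(3,4) subseq_set by fastforce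
  then obtain M b Rest2 where MR: "Rest = M @ b # Rest2" "a < b" "\<forall>x\<in>set M. \<not> a < x"
    using split_list_first_prop[of Rest "\<lambda>x. a < x"] by blast
  have "u0 \<notin> set M" using MR(3) PR(4) by auto
  then have "subseq [u0, w0] (b # Rest2)" using subseq_skip PR(3) MR(1) by metis
  then have "w0 \<in> set Rest2" by (cases "u0 = b") (auto simp: subseq_singleton_left dest: subseq_Cons')
  then have "\<exists>x\<in>set Rest2. a < x" using PR(5) by blast
  then obtain N c R where NR: "Rest2 = N @ c # R" "a < c" "\<forall>x\<in>set N. \<not> a < x"
    using split_list_first_prop[of Rest2 "\<lambda>x. a < x"] by blast
  have tau: "\<tau> = P @ a # M @ b # N @ c # R" using PR(1) MR(1) NR(1) by simp
  have bP: "b \<notin> set P" "c \<notin> set P" "a \<notin> set P" "b \<noteq> c" using dist unfolding tau by auto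
  have Pgt: "a < v" if vP: "v \<in> set P" for v
  proof (rule ccontr)
    assume "\<not> a < v"
    then have "v < a" using vP bP(3) by (metis linorder_neqE_nat)
    obtain P1 P2 where "P = P1 @ v # P2" using split_list[OF vP] by blast
    moreover have "subseq [a, b] (P2 @ a # Rest)"
      by (rule list_emb_append2) (simp add: MR(1) subseq_singleton_left)
    ultimately show False using LM \<open>v < a\<close> MR(2) by fastforce
  qed
  let ?ok = "\<lambda>st. \<not> bad st"
  define L where "L = snd (run ?ok P [])"
  have revL: "subseq (rev L) P" using run_rev[of ?ok P "[]"] by (simp add: L_def)
  define L' where "L' = snd (pops ?ok a L)"
  have LL': "L = fst (pops ?ok a L) @ L'" using pops_split[of ?ok a L] by (simp add: L'_def)
  have revL': "subseq (rev L') P"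
    using revL LL' by (metis list_emb_append2 rev_append subseq_order.order_refl subseq_order.order_trans subseq_rev)
  have Lgt: "\<forall>e\<in>set L'. a < e" using subseq_set[OF revL'] Pgt by auto
  have gA: "\<not> bad (a # L')"
    using pops_ok[of ?ok a L] bad_single by (auto simp: L'_def)
  have gA': "\<forall>e\<in>set (a # L'). a \<le> e" using Lgt by auto
  have Kok: "\<not> bad (y # a # L')" if yR: "y \<in> set Rest" "y \<notin> set P" for y
  proof (rule okPush[OF gA], intro allI impI)
    fix j assume j: "Suc j < length (a # L')" "(a # L') ! Suc j < (a # L') ! j"
    show "y < (a # L') ! j"
    proof (cases j)
      case 0
      then show ?thesis using j Lgt by (cases L') auto
    next
      case (Suc j')
      have jj: "Suc j' < length L'" "L' ! Suc j' < L' ! j'" using j Suc by auto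
      have sub: "subseq [L' ! Suc j', L' ! j'] P" by (rule subseq_desc_rev[OF revL' jj(1)])
      have inP: "L' ! j' \<in> set P" using subseq_set[OF sub] by auto
      show ?thesis
      proof (rule ccontr)
        assume "\<not> y < (a # L') ! j"
        then have "L' ! j' < y" using Suc inP yR(2) by (metis linorder_neqE_nat nth_Cons_Suc)
        obtain P1 v vs where "P = P1 @ v # vs" "L' ! Suc j' = v" "subseq [L' ! j'] vs"
          using list_emb_ConsD[OF sub] by blast
        moreover have "subseq [L' ! j', y] (vs @ a # Rest)"
          using calculation(3) yR(1) by (intro subseq_pair) (auto simp: subseq_singleton_left)
        ultimately show False using LM jj(2) \<open>L' ! j' < y\<close> by fastforce
      qed
    qed
  qed
  have Mle: "x \<le> a" if "x \<in> set M" for x using MR(3) that by (meson not_le)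
  have Nle: "x \<le> a" if "x \<in> set N" for x using NR(3) that by (meson not_le)
  have floorM: "\<forall>x\<in>set M. \<not> bad (x # a # L')"
    using floorGe[OF gA gA'] Mle by blast
  obtain U where U: "snd (run ?ok M ([] @ a # L')) = U @ a # L'" "set U \<subseteq> set M \<union> set []"
    using run_floor[of "a # L'" M ?ok "[]"] floorM by blast
  have Ule: "\<forall>x\<in>set U. x \<le> a" using U(2) Mle by auto
  have bR: "b \<in> set Rest" "c \<in> set Rest" using MR(1) NR(1) by auto
  obtain A1 A2 where A: "U = A1 @ A2" "pops ?ok b (U @ a # L') = (A1, A2 @ a # L')"
    using pops_floor[of "a # L'" ?ok b U] Kok[OF bR(1) bP(1)] by auto
  define W where "W = A2 @ a # L'"
  have gBW: "\<not> bad (b # W)" using pops_ok[of ?ok b "U @ a # L'"] A(2) by (auto simp: W_def)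
  have floorN: "\<forall>x\<in>set N. \<not> bad (x # b # W)"
    using floorTop[OF gBW] Nle MR(2) by fastforce
  obtain V where V: "snd (run ?ok N ([] @ b # W)) = V @ b # W" "set V \<subseteq> set N \<union> set []"
    using run_floor[of "b # W" N ?ok "[]"] floorN by blast
  have ch1: "subseq X (sc ?ok \<tau> [])" if "subseq X (sc ?ok (c # R) (V @ b # W))" for X
  proof -
    have "subseq X (sc ?ok (N @ c # R) (b # W))"
      using that sc_append[of ?ok N "c # R" "b # W"] V(1) by (simp add: list_emb_append2)
    then have "subseq X (sc ?ok (b # N @ c # R) (U @ a # L'))"
      using sc_pops[of ?ok b "N @ c # R" "U @ a # L'"] A(2) by (simp add: list_emb_append2 W_def)
    then have "subseq X (sc ?ok (M @ b # N @ c # R) (a # L'))"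
      using sc_append[of ?ok M "b # N @ c # R" "a # L'"] U(1) by (simp add: list_emb_append2)
    then have "subseq X (sc ?ok (a # M @ b # N @ c # R) L)"
      using sc_pops[of ?ok a "M @ b # N @ c # R" L] by (simp add: list_emb_append2 L'_def)
    then show ?thesis
      using sc_append[of ?ok P "a # M @ b # N @ c # R" "[]"] unfolding tau
      by (simp add: list_emb_append2 L_def)
  qed
  have "\<exists>x y z. subseq [y, z, x] (sc ?ok \<tau> []) \<and> x < y \<and> y < z"
  proof (cases "c < b")
    case True
    have "\<not> bad (c # b # W)" by (rule floorTop[OF gBW True])
    then obtain A3 A4 where "pops ?ok c (V @ b # W) = (A3, A4 @ b # W)"
      using pops_floor[of "b # W" ?ok c V] by auto
    then have "sc ?ok (c # R) (V @ b # W) = A3 @ sc ?ok R (c # A4 @ b # W)"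
      using sc_pops[of ?ok c R "V @ b # W"] by simp
    moreover have "subseq [c, b, a] (c # A4 @ b # W)" unfolding W_def
      by (simp add: list_emb_append2 subseq_singleton_left)
    ultimately have "subseq [c, b, a] (sc ?ok (c # R) (V @ b # W))"
      by (metis list_emb_append2 sc_stack subseq_order.order_trans)
    then show ?thesis using ch1 True NR(2) by blast
  next
    case False
    then have cb: "b < c" using bP(4) by simp
    have "\<not> bad (c # a # L')" by (rule Kok[OF bR(2) bP(2)])
    then obtain A5 A6 where A56: "V @ b # A2 = A5 @ A6" "pops ?ok c ((V @ b # A2) @ a # L') = (A5, A6 @ a # L')"
      using pops_floor[of "a # L'" ?ok c "V @ b # A2"] by blast
    have "b \<in> set A5"
    proof (rule ccontr)
      assume nb: "b \<notin> set A5"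
      obtain us where us: "A6 = us @ b # A2"
      proof -
        from A56(1) have "b \<in> set (A5 @ A6)" by (metis in_set_conv_decomp)
        from A56(1) show ?thesis
          using nb that by (auto simp: append_eq_append_conv2 Cons_eq_append_conv)
      qed
      have "\<not> bad (c # A6 @ a # L')"
        using pops_ok[of ?ok c "(V @ b # A2) @ a # L'"] A56(2) by auto
      moreover have "bad (c # us @ b # hd (A2 @ [a]) # tl (A2 @ [a]) @ L')"
      proof (rule bad_desc[OF _ cb])
        show "hd (A2 @ [a]) < b"
        proof (cases A2)
          case Nil then show ?thesis using MR(2) by simp
        next
          case (Cons e es)
          then have "e \<le> a" using Ule A(1) by auto
          then show ?thesis using Cons MR(2) by simp
        qed
      qed
      moreover have "us @ b # hd (A2 @ [a]) # tl (A2 @ [a]) @ L' = A6 @ a # L'"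
        using us by (cases A2) auto
      ultimately show False by simp
    qed
    have "sc ?ok (c # R) (V @ b # W) = A5 @ sc ?ok R (c # A6 @ a # L')"
      using sc_pops[of ?ok c R "V @ b # W"] A56(2) by (simp add: W_def)
    moreover have "subseq [c, a] (sc ?ok R (c # A6 @ a # L'))"
      using sc_stack[of "c # A6 @ a # L'" ?ok R]
      by (metis list_emb_append2 subseq_Cons2 subseq_order.order_trans subseq_singleton_left list.set_intros(1) append_Cons)
    ultimately have "subseq [b, c, a] (sc ?ok (c # R) (V @ b # W))"
      using \<open>b \<in> set A5\<close> list_emb_append_mono[of "(=)" "[b]" A5 "[c, a]"]
      by (simp add: subseq_singleton_left)
    then show ?thesis using ch1 cb MR(2) by blast
  qed
  then obtain x y z where xyz: "subseq [y, z, x] (SC_3_21 \<tau>)" "x < y" "y < z"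
    unfolding SC_eq by blast
  have "subseq [y, x] (west_s (SC_3_21 \<tau>))"
    unfolding west_eq by (rule west_231) (use xyz in auto)
  show ?thesis
  proof
    assume "west_s (SC_3_21 \<tau>) = [1..<n+1]"
    then have "subseq [y, x] [1..<n+1]" using \<open>subseq [y, x] (west_s (SC_3_21 \<tau>))\<close> by simp
    then obtain i j where "i < j" "j < length [1..<n+1]" "[1..<n+1] ! i = y" "[1..<n+1] ! j = x"
      unfolding subseq2_idx by blast
    then have "y < x" by (simp del: upt_Suc)
    then show False using xyz(2) by simp
  qed
qed

lemma claimB:
  assumes "\<tau> \<in> perms n" "\<not> contains [1,2,3] \<tau>" "\<not> contains [1,3,2] \<tau>"
  shows "west_s (SC_3_21 \<tau>) = [1..<n+1]"
proof -
  have "SC_3_21 \<tau> = rev \<tau> @ []"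
    unfolding SC_eq
  proof (rule sc_push_all, intro allI impI notI)
    fix pre x suf assume tau: "\<tau> = pre @ x # suf" and b: "bad (x # rev pre @ [])"
    define w where "w = x # rev pre"
    obtain i j where ij: "i < j" "Suc j < length w" "w ! Suc j < w ! j" "w ! j < w ! i"
      using b unfolding bad_def w_def by auto
    have "subseq [w ! i, w ! j, w ! Suc j] w" unfolding subseq3_idx using ij by blast
    then have "subseq [w ! Suc j, w ! j, w ! i] (pre @ [x])"
      using subseq_rev by (fastforce simp: w_def)
    then have "subseq [w ! Suc j, w ! j, w ! i] \<tau>" unfolding tau
      using subseq_rev_drop_many by fastforce
    then have "contains [1,2,3] \<tau>" unfolding c123 using ij by blast
    then show False using assms(2) by blast
  qed
  then have sc: "SC_3_21 \<tau> = rev \<tau>" by simp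
  have "sorted (sc sorted (rev \<tau>) [])"
  proof (rule west_sorted)
    show "\<forall>y u v. subseq [y, u, v] (rev \<tau>) \<longrightarrow> \<not> (v < y \<and> y < u)"
    proof (intro allI impI notI)
      fix y u v assume "subseq [y, u, v] (rev \<tau>)" "v < y \<and> y < u"
      then have "subseq [v, u, y] \<tau>" using subseq_rev by fastforce
      then have "contains [1,3,2] \<tau>" unfolding c132 using \<open>v < y \<and> y < u\<close> by blast
      then show False using assms(3) by blast
    qed
  qed auto
  then show ?thesis unfolding west_eq sc
    by (intro output_perm[OF assms(1)]) (auto simp: sc_set sc_length)
qed



theorem mainTheorem7:
  fixes n :: nat
  assumes "n \<ge> 1"
  shows "Sort_SC_3_21 n = Av n [[1, 2, 3], [1, 3, 2]]"
proof
  show "Sort_SC_3_21 n \<subseteq> Av n [[1, 2, 3], [1, 3, 2]]"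
  proof
    fix \<tau> assume "\<tau> \<in> Sort_SC_3_21 n"
    then have t: "\<tau> \<in> perms n" "west_s (SC_3_21 \<tau>) = [1..<n+1]" unfolding Sort_SC_3_21_def by auto
    have "\<not> (\<exists>x y z. subseq [x,y,z] \<tau> \<and> x < y \<and> x < z)" using claimA[OF t(1)] t(2) by blast
    then have "\<not> contains [1,2,3] \<tau>" "\<not> contains [1,3,2] \<tau>" unfolding c123 c132
      by (meson less_trans)+
    then show "\<tau> \<in> Av n [[1, 2, 3], [1, 3, 2]]" unfolding Av_def using t(1) by auto
  qed
next
  show "Av n [[1, 2, 3], [1, 3, 2]] \<subseteq> Sort_SC_3_21 n"
  proof
    fix \<tau> assume "\<tau> \<in> Av n [[1, 2, 3], [1, 3, 2]]"
    then have t: "\<tau> \<in> perms n" "\<not> contains [1,2,3] \<tau>" "\<not> contains [1,3,2] \<tau>"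
      unfolding Av_def by auto
    then show "\<tau> \<in> Sort_SC_3_21 n" unfolding Sort_SC_3_21_def using claimB[OF t] by auto
  qed
qed

end
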